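(* Let $k\ge 0$ be an integer and let $G$ be a finite simple graph on $n\ge 1$ vertices with average degree $d(G)$. Then $\alpha_k(G) > \frac{k+1}{d(G)+2k+2}\, n$.
   Context: For a graph $G=(V,E)$ and an integer $k\ge 0$, a $k$-independent set is a set $S\subseteq V$ such that the induced subgraph $G[S]$ has maximum degree at most $k$; $\alpha_k(G)$ denotes the maximum cardinality of a $k$-independent set of $G$. The average degree is $d(G)=\frac{1}{n}\sum_{v\in V}\deg(v)=\frac{2|E|}{n}$. *)

theory Defs
  imports Complex_Main
begin

definition simple_graph :: "'a set \<Rightarrow> 'a set set \<Rightarrow> bool" where
  "simple_graph V E \<longleftrightarrow> finite V \<and> (\<forall>e\<in>E. e \<subseteq> V \<and> card e = 2)"

definition degree :: "'a set set \<Rightarrow> 'a \<Rightarrow> nat" where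
  "degree E v = card {e \<in> E. v \<in> e}"

definition induced_degree :: "'a set set \<Rightarrow> 'a set \<Rightarrow> 'a \<Rightarrow> nat" where
  "induced_degree E S v = card {e \<in> E. v \<in> e \<and> e \<subseteq> S}"

definition k_independent :: "'a set \<Rightarrow> 'a set set \<Rightarrow> nat \<Rightarrow> 'a set \<Rightarrow> bool" where
  "k_independent V E k S \<longleftrightarrow> S \<subseteq> V \<and> (\<forall>v\<in>S. induced_degree E S v \<le> k)"

definition alpha_k :: "'a set \<Rightarrow> 'a set set \<Rightarrow> nat \<Rightarrow> nat" where
  "alpha_k V E k = Max (card ` {S. k_independent V E k S})"

definition avg_degree :: "'a set \<Rightarrow> 'a set set \<Rightarrow> real" where
  "avg_degree V E = (\<Sum>v\<in>V. real (degree E v)) / real (card V)"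

end

theory Submission
  imports Defs
begin

lemma dc:
  assumes "finite A" "finite F"
  shows "(\<Sum>w\<in>A. card {e\<in>F. w\<in>e}) = (\<Sum>e\<in>F. card (e \<inter> A))"
proof -
  have 1: "card {e\<in>F. w\<in>e} = (\<Sum>e\<in>F. if w \<in> e then 1 else 0)" for w
    using assms(2) by (simp add: sum.If_cases Int_def)
  have 2: "card (e \<inter> A) = (\<Sum>w\<in>A. if w \<in> e then 1 else 0)" for e
    using assms(1) by (simp add: sum.If_cases Int_def conj_commute)
  show ?thesis unfolding 1 2 by (rule sum.swap)
qed

lemma finE: "simple_graph V E \<Longrightarrow> finite E"
proof -
  assume G: "simple_graph V E"
  then have "E \<subseteq> Pow V" "finite V" unfolding simple_graph_def by auto
  then show "finite E" by (intro finite_subset[of E "Pow V"]) auto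
qed

lemma sum_deg: assumes "simple_graph V E"
  shows "(\<Sum>w\<in>V. degree E w) = 2 * card E"
proof -
  have fV: "finite V" using assms unfolding simple_graph_def by auto
  have "(\<Sum>w\<in>V. degree E w) = (\<Sum>e\<in>E. card (e \<inter> V))"
    unfolding degree_def using dc[OF fV finE[OF assms]] .
  also have "\<dots> = (\<Sum>e\<in>E. 2)"
    by (rule sum.cong) (use assms in \<open>auto simp: simple_graph_def Int_absorb2\<close>)
  finally show ?thesis by simp
qed

lemma alpha_ge: assumes "simple_graph V E" "k_independent V E k S"
  shows "card S \<le> alpha_k V E k"
proof -
  have "{S. k_independent V E k S} \<subseteq> Pow V" unfolding k_independent_def by auto
  then have "finite {S. k_independent V E k S}"
    using assms(1) unfolding simple_graph_def by (meson finite_Pow_iff finite_subset)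
  then show ?thesis unfolding alpha_k_def using assms(2) by (intro Max_ge) auto
qed


lemma good_set:
  assumes G: "simple_graph V E"
  shows "\<exists>S. k_independent V E k S \<and> (k+1) * card (V - S) \<le> (\<Sum>u\<in>S. degree E u)"
proof -
  have fV: "finite V" using G unfolding simple_graph_def by auto
  have fE: "finite E" using finE[OF G] .
  define c where "c = k + 1"
  define psi where "psi = (\<lambda>S. (2 * int c - 1) * int (card S) - 2 * int (card {e\<in>E. e \<subseteq> S}))"
  define M where "M = Max (psi ` Pow V)"
  have fin: "finite (psi ` Pow V)" using fV by simp
  have "M \<in> psi ` Pow V" unfolding M_def using fin by (intro Max_in) auto
  then obtain S where SV: "S \<subseteq> V" and SM: "psi S = M" by auto
  have maxS: "psi T \<le> psi S" if "T \<subseteq> V" for T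
    unfolding SM M_def using fin that by (intro Max_ge) auto
  have fS: "finite S" using SV fV finite_subset by blast
  have indep: "induced_degree E S v \<le> k" if vS: "v \<in> S" for v
  proof -
    have eq: "{e\<in>E. e \<subseteq> S} = {e\<in>E. e \<subseteq> S - {v}} \<union> {e\<in>E. v\<in>e \<and> e\<subseteq>S}" by auto
    have C1: "card {e\<in>E. e \<subseteq> S} = card {e\<in>E. e \<subseteq> S - {v}} + card {e\<in>E. v\<in>e \<and> e\<subseteq>S}"
      unfolding eq using fE by (intro card_Un_disjoint) auto
    have C2: "card S = card (S - {v}) + 1" using card_Suc_Diff1[OF fS vS] by simp
    have "psi (S - {v}) \<le> psi S" using SV by (intro maxS) auto
    then have "psi (S - {v}) \<le> psi (S - {v}) + (2 * int c - 1) - 2 * int (card {e\<in>E. v\<in>e \<and> e\<subseteq>S})"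
      unfolding psi_def C1 C2 by (simp add: algebra_simps)
    then have "2 * int (card {e\<in>E. v\<in>e \<and> e\<subseteq>S}) \<le> 2 * int c - 1" by linarith
    then show ?thesis unfolding induced_degree_def c_def by simp
  qed
  define E1 where "E1 = {e\<in>E. e \<inter> S \<noteq> {} \<and> e \<inter> (V - S) \<noteq> {}}"
  have fE1: "finite E1" using fE E1_def by simp
  have outs: "c \<le> card {e\<in>E1. w\<in>e}" if wV: "w \<in> V - S" for w
  proof -
    have eq: "{e\<in>E. e \<subseteq> insert w S} = {e\<in>E. e \<subseteq> S} \<union> {e\<in>E. w\<in>e \<and> e\<subseteq>insert w S}" by auto
    have C1: "card {e\<in>E. e \<subseteq> insert w S} = card {e\<in>E. e \<subseteq> S} + card {e\<in>E. w\<in>e \<and> e\<subseteq>insert w S}"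
      unfolding eq using fE wV by (intro card_Un_disjoint) auto
    have C2: "card (insert w S) = card S + 1" using wV fS by simp
    have "psi (insert w S) \<le> psi S" using SV wV by (intro maxS) auto
    then have "psi S + (2 * int c - 1) - 2 * int (card {e\<in>E. w\<in>e \<and> e\<subseteq>insert w S}) \<le> psi S"
      unfolding psi_def C1 C2 by (simp add: algebra_simps)
    then have "2 * int c - 1 \<le> 2 * int (card {e\<in>E. w\<in>e \<and> e\<subseteq>insert w S})" by linarith
    then have 1: "c \<le> card {e\<in>E. w\<in>e \<and> e\<subseteq>insert w S}" by simp
    have "{e\<in>E. w\<in>e \<and> e\<subseteq>insert w S} \<subseteq> {e\<in>E1. w\<in>e}"
    proof safe
      fix e assume e: "e \<in> E" "w \<in> e" "e \<subseteq> insert w S"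
      then have "card e = 2" using G unfolding simple_graph_def by auto
      then obtain a b where ab: "e = {a,b}" "a \<noteq> b" by (meson card_2_iff)
      then obtain u where "u \<in> e" "u \<noteq> w" using e(2) by blast
      then have "u \<in> S" using e(3) by auto
      then show "e \<in> E1" unfolding E1_def using e wV \<open>u \<in> e\<close> by auto
    qed
    then have "card {e\<in>E. w\<in>e \<and> e\<subseteq>insert w S} \<le> card {e\<in>E1. w\<in>e}"
      using fE1 by (intro card_mono) auto
    with 1 show ?thesis by simp
  qed
  have one: "card (e \<inter> (V - S)) = card (e \<inter> S)" if eE: "e \<in> E1" for e
  proof -
    have e: "e \<in> E" "e \<inter> S \<noteq> {}" "e \<inter> (V - S) \<noteq> {}" using eE E1_def by auto
    have "e \<subseteq> V" "card e = 2" using G e(1) unfolding simple_graph_def by auto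
    then have fe: "finite e" by (metis card.infinite zero_neq_numeral)
    have "e = (e \<inter> (V - S)) \<union> (e \<inter> S)" using \<open>e \<subseteq> V\<close> by auto
    moreover have "card ((e \<inter> (V - S)) \<union> (e \<inter> S)) = card (e \<inter> (V - S)) + card (e \<inter> S)"
      using fe by (intro card_Un_disjoint) auto
    ultimately have "card e = card (e \<inter> (V - S)) + card (e \<inter> S)" by simp
    moreover have "card (e \<inter> (V - S)) \<ge> 1" "card (e \<inter> S) \<ge> 1"
      using e fe by (auto simp: Suc_le_eq card_gt_0_iff)
    ultimately show ?thesis using \<open>card e = 2\<close> by linarith
  qed
  have "c * card (V - S) = (\<Sum>w\<in>V - S. c)" by simp
  also have "\<dots> \<le> (\<Sum>w\<in>V - S. card {e\<in>E1. w\<in>e})" by (intro sum_mono outs)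
  also have "\<dots> = (\<Sum>e\<in>E1. card (e \<inter> (V - S)))" using dc[of "V - S" E1] fV fE1 by simp
  also have "\<dots> = (\<Sum>e\<in>E1. card (e \<inter> S))" by (intro sum.cong one) auto
  also have "\<dots> = (\<Sum>u\<in>S. card {e\<in>E1. u\<in>e})" using dc[OF fS fE1] by simp
  also have "\<dots> \<le> (\<Sum>u\<in>S. degree E u)" unfolding degree_def
    using fE by (intro sum_mono card_mono) (auto simp: E1_def)
  finally have "c * card (V - S) \<le> (\<Sum>u\<in>S. degree E u)" .
  moreover have "k_independent V E k S" unfolding k_independent_def using SV indep by auto
  ultimately show ?thesis unfolding c_def by blast
qed


lemma delete:
  assumes G: "simple_graph V E" and vV: "v \<in> V"
  shows "simple_graph (V - {v}) {e\<in>E. v \<notin> e}"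
    and "card E = card {e\<in>E. v \<notin> e} + degree E v"
    and "k_independent (V - {v}) {e\<in>E. v \<notin> e} k S \<Longrightarrow> k_independent V E k S"
proof -
  show "simple_graph (V - {v}) {e\<in>E. v \<notin> e}" using G unfolding simple_graph_def by auto
  have "E = {e\<in>E. v \<notin> e} \<union> {e\<in>E. v \<in> e}" by auto
  then show "card E = card {e\<in>E. v \<notin> e} + degree E v" unfolding degree_def
    using finE[OF G] by (metis (no_types, lifting) card_Un_disjoint disjoint_iff finite_Un mem_Collect_eq)
  assume a: "k_independent (V - {v}) {e\<in>E. v \<notin> e} k S"
  then have SV: "S \<subseteq> V - {v}" unfolding k_independent_def by auto
  have "induced_degree {e\<in>E. v \<notin> e} S w = induced_degree E S w" for w
    unfolding induced_degree_def using SV by (intro arg_cong[where f=card]) auto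
  then show "k_independent V E k S" using a unfolding k_independent_def by auto
qed

lemma core:
  assumes "simple_graph V E" "card V \<ge> 1"
  shows "\<exists>S. k_independent V E k S \<and>
     real (card S) * (real (2 * card E) + 2 * (real k + 1) * real (card V)) > (real k + 1) * real (card V) ^ 2"
  using assms
proof (induction "card V" arbitrary: V E rule: less_induct)
  case less
  note G = less.prems(1)
  define n where "n = real (card V)"
  define c where "c = real k + 1"
  define D where "D = real (2 * card E)"
  have n1: "n \<ge> 1" using less.prems n_def by simp
  have c1: "c \<ge> 1" using c_def by simp
  have D0: "D \<ge> 0" using D_def by simp
  have fV: "finite V" using G unfolding simple_graph_def by auto
  show ?case
  proof (cases "\<exists>v\<in>V. n * real (degree E v) \<ge> c * n + D")
    case False
    then have lt: "n * real (degree E u) < c * n + D" if "u \<in> V" for u using that by auto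
    obtain S where S: "k_independent V E k S" "(k+1) * card (V - S) \<le> (\<Sum>u\<in>S. degree E u)"
      using good_set[OF G] by blast
    have SV: "S \<subseteq> V" using S(1) unfolding k_independent_def by auto
    have fS: "finite S" using SV fV finite_subset by blast
    define s where "s = real (card S)"
    define R where "R = real (\<Sum>u\<in>S. degree E u)"
    have cVS: "real (card (V - S)) = n - s" unfolding n_def s_def using SV fS
      by (simp add: card_Diff_subset of_nat_diff card_mono fV)
    have 1: "c * (n - s) \<le> R" using S(2) unfolding R_def c_def cVS[symmetric]
      by (metis of_nat_1 of_nat_add of_nat_le_iff of_nat_mult)
    have Sne: "S \<noteq> {}"
    proof
      assume "S = {}"
      then have "c * n \<le> 0" using 1 R_def s_def by simp
      moreover have "c * n > 0" using c1 n1 by (intro mult_pos_pos) auto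
      ultimately show False by linarith
    qed
    have "n * R = (\<Sum>u\<in>S. n * real (degree E u))" unfolding R_def by (simp add: sum_distrib_left)
    also have "\<dots> < (\<Sum>u\<in>S. c * n + D)" using Sne fS SV lt by (intro sum_strict_mono) auto
    also have "\<dots> = s * (c * n + D)" unfolding s_def by simp
    finally have 2: "n * R < s * (c * n + D)" .
    have "n * (c * (n - s)) \<le> n * R" using 1 n1 by (intro mult_left_mono) auto
    with 2 have "c * n ^ 2 < s * (D + 2 * c * n)" by (simp add: algebra_simps power2_eq_square)
    then show ?thesis using S(1) unfolding s_def c_def n_def D_def by (intro exI[of _ S]) auto
  next
    case True
    then obtain v where vV: "v \<in> V" and big: "n * real (degree E v) \<ge> c * n + D" by blast
    define V' where "V' = V - {v}"
    define E' where "E' = {e\<in>E. v \<notin> e}"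
    have G': "simple_graph V' E'" using delete(1)[OF G vV] V'_def E'_def by simp
    have cardE: "card E = card E' + degree E v" using delete(2)[OF G vV] E'_def by simp
    have "n * real (degree E v) \<ge> n * c" using big D0 by (simp add: algebra_simps)
    moreover have "n > 0" using n1 by linarith
    ultimately have "real (degree E v) \<ge> c" using mult_le_cancel_left_pos[of n c "real (degree E v)"] by blast
    then have "degree E v \<noteq> 0" using c1 by auto
    then have "{e\<in>E. v \<in> e} \<noteq> {}" unfolding degree_def by force
    then obtain e where e: "e \<in> E" "v \<in> e" by auto
    then have "card e = 2" "e \<subseteq> V" using G e(1) unfolding simple_graph_def by auto
    then obtain a b where ab: "e = {a,b}" "a \<noteq> b" by (meson card_2_iff)
    then obtain u where "u \<in> e" "u \<noteq> v" by blast
    then have "u \<in> V'" using \<open>e \<subseteq> V\<close> V'_def by auto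
    moreover have "finite V'" using fV V'_def by simp
    ultimately have "card V' > 0" using card_gt_0_iff by blast
    then have cV': "card V' \<ge> 1" by simp
    have cV'eq: "card V' = card V - 1" using V'_def vV fV by simp
    have "card V' < card V" using cV' cV'eq by simp
    from less.hyps[OF this G' cV'] obtain S where
      S: "k_independent V' E' k S"
      "real (card S) * (real (2 * card E') + 2 * (real k + 1) * real (card V')) > (real k + 1) * real (card V') ^ 2"
      by blast
    have SI: "k_independent V E k S" using delete(3)[OF G vV] S(1) V'_def E'_def by simp
    define s where "s = real (card S)"
    define d where "d = real (degree E v)"
    have rV': "real (card V') = n - 1" using cV'eq n_def less.prems(2) by simp
    have rE': "real (2 * card E') = D - 2 * d" unfolding D_def d_def cardE by simp
    define P where "P = D - 2 * d + 2 * c * (n - 1)"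
    define Q where "Q = D + 2 * c * n"
    have "real (card V') \<ge> 1" using cV' by simp
    then have n2: "n - 1 \<ge> 1" using rV' by linarith
    have "c * (n - 1) \<ge> 1 * 1" using c1 n2 by (intro mult_mono) auto
    moreover have "D - 2 * d \<ge> 0" using rE'[symmetric] by simp
    ultimately have P0: "P > 0" unfolding P_def by linarith
    have 1: "s * P > c * (n - 1) ^ 2" using S(2) unfolding s_def P_def c_def rV' rE' by (simp add: algebra_simps)
    have bigd: "n * d \<ge> c * n + D" using big d_def by simp
    have 2: "(n - 1) ^ 2 * Q \<ge> n ^ 2 * P"
    proof -
      have "(n - 1) ^ 2 * Q - n ^ 2 * P = 2 * n * (n * d) - 2 * c * n^2 - 2 * n * D + D + 2 * c * n"
        unfolding P_def Q_def by algebra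
      also have "\<dots> \<ge> 2 * n * (c * n + D) - 2 * c * n^2 - 2 * n * D + D + 2 * c * n"
      proof -
        have "2 * n * (c * n + D) \<le> 2 * n * (n * d)" using bigd n1 by (intro mult_left_mono) auto
        then show ?thesis by linarith
      qed
      also have "2 * n * (c * n + D) - 2 * c * n^2 - 2 * n * D + D + 2 * c * n = D + 2 * c * n"
        by algebra
      finally have "(n - 1) ^ 2 * Q - n ^ 2 * P \<ge> D + 2 * c * n" .
      moreover have "c * n > 0" using c1 n1 by (intro mult_pos_pos) auto
      ultimately show ?thesis using D0 by linarith
    qed
    have "c * n > 0" using c1 n1 by (intro mult_pos_pos) auto
    then have Q0: "Q > 0" unfolding Q_def using D0 by linarith
    have "s * P * Q > c * (n - 1) ^ 2 * Q" using 1 Q0 by (intro mult_strict_right_mono) auto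
    moreover have "c * ((n - 1) ^ 2 * Q) \<ge> c * (n ^ 2 * P)" using 2 c1 by (intro mult_left_mono) auto
    ultimately have "(s * Q) * P > (c * n ^ 2) * P" by (simp add: algebra_simps)
    then have "s * Q > c * n ^ 2" using P0 by (meson mult_less_cancel_right_pos)
    then show ?thesis using SI unfolding s_def Q_def c_def n_def D_def by (intro exI[of _ S]) auto
  qed
qed

theorem mainTheorem2:
  fixes V :: "'a set" and E :: "'a set set" and k :: nat
  assumes "simple_graph V E" and "card V \<ge> 1"
  shows "real (alpha_k V E k) >
           (real k + 1) / (avg_degree V E + 2 * real k + 2) * real (card V)"
proof -
  obtain S where S: "k_independent V E k S"
     "real (card S) * (real (2 * card E) + 2 * (real k + 1) * real (card V)) > (real k + 1) * real (card V) ^ 2"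
    using core[OF assms] by blast
  define n where "n = real (card V)"
  define D where "D = real (2 * card E)"
  have n1: "n \<ge> 1" using assms n_def by simp
  have avg: "avg_degree V E = D / n" unfolding avg_degree_def D_def n_def
    using sum_deg[OF assms(1)] by (metis of_nat_sum)
  have D0: "D \<ge> 0" using D_def by simp
  have "(real k + 1) * n > 0" using n1 by (intro mult_pos_pos) auto
  then have pos: "D + 2 * (real k + 1) * n > 0" using D0 by linarith
  have "(real k + 1) / (avg_degree V E + 2 * real k + 2) * n = (real k + 1) * n ^ 2 / (D + 2 * (real k + 1) * n)"
    unfolding avg using n1 D0 by (simp add: field_simps power2_eq_square)
  also have "\<dots> < real (card S)" using S(2) unfolding n_def[symmetric] D_def[symmetric]
    using pos by (simp add: pos_divide_less_eq algebra_simps)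
  also have "\<dots> \<le> real (alpha_k V E k)" using alpha_ge[OF assms(1) S(1)] by simp
  finally show ?thesis unfolding n_def .
qed

end
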